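(* Let $E$ be a finite-dimensional real affine space and let $G(E)$ be the set of generalized affine functions on $E$, equipped with the topology of pointwise convergence. Then $G(E)$ is sequentially compact: every sequence in $G(E)$ has a subsequence converging pointwise to an element of $G(E)$.
   Context: A generalized affine function on $E$ is a function $E\to\overline{\mathbb{R}}=\mathbb{R}\cup\{\pm\infty\}$ that is both convex and concave (extended-real-valued sense). The topology of pointwise convergence is the subspace topology from the product topology on $\overline{\mathbb{R}}^{E}$. *)

theory Defs
  imports "HOL-Analysis.Analysis" "HOL-Library.Extended_Real"
begin

definition ext_convex :: "('a::real_vector \<Rightarrow> ereal) \<Rightarrow> bool" where
  "ext_convex f \<longleftrightarrow> convex {(x, t::real). f x \<le> ereal t}"

definition ext_concave :: "('a::real_vector \<Rightarrow> ereal) \<Rightarrow> bool" where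
  "ext_concave f \<longleftrightarrow> convex {(x, t::real). ereal t \<le> f x}"

definition generalized_affine :: "('a::real_vector \<Rightarrow> ereal) \<Rightarrow> bool" where
  "generalized_affine f \<longleftrightarrow> ext_convex f \<and> ext_concave f"

end

theory Submission
  imports Defs "HOL-Library.Diagonal_Subsequence"
begin

lemma neg_le1[simp]: "- (a::ereal) \<le> ereal (-b) \<longleftrightarrow> ereal b \<le> a"
  by (cases a) auto
lemma neg_le2[simp]: "ereal (-b) \<le> - (a::ereal) \<longleftrightarrow> a \<le> ereal b"
  by (cases a) auto

lemma neg_le3: "- (a::ereal) \<le> ereal b \<longleftrightarrow> ereal (-b) \<le> a"
  by (cases a) auto

lemma conv_ineq:
  assumes "ext_convex f" "f x \<le> ereal s" "f y \<le> ereal t" "0 \<le> u" "0 \<le> v" "u + v = 1"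
  shows "f (u *\<^sub>R x + v *\<^sub>R y) \<le> ereal (u * s + v * t)"
proof -
  have c: "convex {(x, t::real). f x \<le> ereal t}" using assms(1) by (simp add: ext_convex_def)
  have m1: "(x, s) \<in> {(x, t::real). f x \<le> ereal t}" using assms(2) by simp
  have m2: "(y, t) \<in> {(x, t::real). f x \<le> ereal t}" using assms(3) by simp
  have "u *\<^sub>R (x, s) + v *\<^sub>R (y, t) \<in> {(x, t::real). f x \<le> ereal t}"
    by (rule convexD[OF c m1 m2 assms(4,5,6)])
  then show ?thesis by simp
qed

lemma concave_neg: "ext_concave f \<longleftrightarrow> ext_convex (\<lambda>x. - f x)"
proof -
  let ?m = "\<lambda>p::'a \<times> real. (fst p, - snd p)"
  have lin: "linear ?m" by (auto simp: linear_iff)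
  have inv: "\<And>X. ?m ` X = {p. ?m p \<in> X}"
  proof
    fix X show "?m ` X \<subseteq> {p. ?m p \<in> X}" by auto
    show "{p. ?m p \<in> X} \<subseteq> ?m ` X"
    proof
      fix p assume "p \<in> {p. ?m p \<in> X}"
      then show "p \<in> ?m ` X" by (intro image_eqI[of _ _ "?m p"]) auto
    qed
  qed
  have eq1: "{(x, t::real). ereal t \<le> f x} = ?m ` {(x, t). - f x \<le> ereal t}"
    unfolding inv by (auto simp: case_prod_beta)
  have eq2: "{(x, t::real). - f x \<le> ereal t} = ?m ` {(x, t). ereal t \<le> f x}"
    unfolding inv using neg_le3 by (auto simp: case_prod_beta)
  show ?thesis unfolding ext_concave_def ext_convex_def
  proof
    assume "convex {(x, t::real). ereal t \<le> f x}"
    then have "convex (?m ` {(x, t::real). ereal t \<le> f x})" by (rule convex_linear_image[OF lin])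
    then show "convex {(x, t::real). - f x \<le> ereal t}" unfolding eq2 .
  next
    assume "convex {(x, t::real). - f x \<le> ereal t}"
    then have "convex (?m ` {(x, t::real). - f x \<le> ereal t})" by (rule convex_linear_image[OF lin])
    then show "convex {(x, t::real). ereal t \<le> f x}" unfolding eq1 .
  qed
qed

lemma ga_neg: "generalized_affine f \<Longrightarrow> generalized_affine (\<lambda>x. - f x)"
  unfolding generalized_affine_def using concave_neg[of f] concave_neg[of "\<lambda>x. - f x"] by simp

lemma conc_ineq:
  assumes "ext_concave f" "ereal s \<le> f x" "ereal t \<le> f y" "0 \<le> u" "0 \<le> v" "u + v = 1"
  shows "ereal (u * s + v * t) \<le> f (u *\<^sub>R x + v *\<^sub>R y)"
proof -
  have "- f (u *\<^sub>R x + v *\<^sub>R y) \<le> ereal (u * (-s) + v * (-t))"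
    using conv_ineq[of "\<lambda>x. - f x" x "-s" y "-t" u v] assms
    by (simp add: concave_neg)
  moreover have "u * (-s) + v * (-t) = - (u * s + v * t)" by simp
  ultimately show ?thesis using neg_le1[of _ "u * s + v * t"] by simp
qed

lemma hull_bound:
  assumes "ext_convex f" "\<And>v. v \<in> T \<Longrightarrow> f v \<le> ereal K" "x \<in> convex hull T"
  shows "f x \<le> ereal K"
proof -
  have "T \<times> {K} \<subseteq> {(x, t). f x \<le> ereal t}" using assms(2) by auto
  then have "convex hull (T \<times> {K}) \<subseteq> {(x, t). f x \<le> ereal t}"
    using assms(1) unfolding ext_convex_def by (intro hull_minimal) auto
  moreover have "(x, K) \<in> convex hull (T \<times> {K})"
    using assms(3) by (simp add: convex_hull_Times)
  ultimately show ?thesis by auto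
qed

lemma hull_bound_conc:
  assumes "ext_concave f" "\<And>v. v \<in> T \<Longrightarrow> ereal K \<le> f v" "x \<in> convex hull T"
  shows "ereal K \<le> f x"
proof -
  have "- f x \<le> ereal (-K)"
    using hull_bound[of "\<lambda>x. - f x" T "-K" x] assms
    by (simp add: concave_neg)
  then show ?thesis by simp
qed

lemma conv_eq:
  assumes "generalized_affine f" "f x = ereal a" "f y = ereal b" "0 \<le> u" "0 \<le> v" "u + v = 1"
  shows "f (u *\<^sub>R x + v *\<^sub>R y) = ereal (u * a + v * b)"
proof (rule antisym)
  show "f (u *\<^sub>R x + v *\<^sub>R y) \<le> ereal (u * a + v * b)"
    using assms by (intro conv_ineq) (auto simp: generalized_affine_def)
  show "ereal (u * a + v * b) \<le> f (u *\<^sub>R x + v *\<^sub>R y)"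
    using assms by (intro conc_ineq) (auto simp: generalized_affine_def)
qed

lemma aff2_neg:
  assumes ga: "generalized_affine f" and fx: "f x = ereal a" and fy: "f y = ereal b"
    and uv: "u + v = 1" and v: "v < 0"
  shows "f (u *\<^sub>R x + v *\<^sub>R y) = ereal (u * a + v * b)"
proof -
  define z where "z = u *\<^sub>R x + v *\<^sub>R y"
  have u: "u > 0" using uv v by simp
  have xz: "x = (1/u) *\<^sub>R z + (-v/u) *\<^sub>R y"
    using u by (simp add: z_def algebra_simps)
  have w: "0 \<le> 1/u" "0 \<le> -v/u" "1/u + (-v/u) = 1"
    using u v uv by (auto simp: field_simps)
  have cx: "ext_convex f" and cc: "ext_concave f" using ga by (auto simp: generalized_affine_def)
  have "f z \<noteq> \<infinity>"
  proof
    assume inf: "f z = \<infinity>"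
    define s where "s = u * (a + 1) + v * b"
    have "ereal ((1/u) * s + (-v/u) * b) \<le> f x"
      unfolding xz by (rule conc_ineq[OF cc]) (use inf fy w in auto)
    moreover have "(1/u) * s + (-v/u) * b = a + 1" using u by (simp add: s_def field_simps)
    ultimately show False using fx by simp
  qed
  moreover have "f z \<noteq> -\<infinity>"
  proof
    assume inf: "f z = -\<infinity>"
    define s where "s = u * (a - 1) + v * b"
    have "f x \<le> ereal ((1/u) * s + (-v/u) * b)"
      unfolding xz by (rule conv_ineq[OF cx]) (use inf fy w in auto)
    moreover have "(1/u) * s + (-v/u) * b = a - 1" using u by (simp add: s_def field_simps)
    ultimately show False using fx by simp
  qed
  ultimately obtain c where fz: "f z = ereal c" by (cases "f z") auto
  have "f x = ereal ((1/u) * c + (-v/u) * b)"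
    unfolding xz using conv_eq[OF ga fz fy w] .
  then have "a = (1/u) * c + (-v/u) * b" using fx by simp
  then have "c = u * a + v * b" using u by (simp add: field_simps)
  then show ?thesis using fz z_def by simp
qed

lemma aff2:
  assumes ga: "generalized_affine f" and fx: "f x = ereal a" and fy: "f y = ereal b"
    and uv: "u + v = 1"
  shows "f (u *\<^sub>R x + v *\<^sub>R y) = ereal (u * a + v * b)"
proof (cases "v < 0")
  case True then show ?thesis using aff2_neg[OF assms] by simp
next
  case False
  show ?thesis
  proof (cases "u < 0")
    case True
    have "f (v *\<^sub>R y + u *\<^sub>R x) = ereal (v * b + u * a)"
      using aff2_neg[OF ga fy fx _ True] uv by simp
    then show ?thesis by (simp add: add.commute)
  next
    case False
    then show ?thesis using conv_eq[OF ga fx fy _ _ uv] \<open>\<not> v < 0\<close> by simp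
  qed
qed

lemma affsum:
  assumes ga: "generalized_affine f"
  shows "finite s \<Longrightarrow> s \<noteq> {} \<Longrightarrow> (\<And>v. v \<in> s \<Longrightarrow> f v = ereal (c v)) \<Longrightarrow> sum u s = 1
    \<Longrightarrow> f (\<Sum>v\<in>s. u v *\<^sub>R v) = ereal (\<Sum>v\<in>s. u v * c v)"
proof (induct "card s" arbitrary: s u rule: less_induct)
  case less
  show ?case
  proof (cases "card s = 1")
    case True
    then obtain a where s: "s = {a}" by (auto simp: card_Suc_eq)
    then show ?thesis using less by simp
  next
    case False
    have "card s > 0" using less(2,3) by (simp add: card_gt_0_iff)
    then have c2: "card s \<ge> 2" using False by linarith
    have "\<exists>b\<in>s. u b \<noteq> 1"
    proof (rule ccontr)
      assume "\<not> ?thesis"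
      then have "sum u s = real (card s)" by simp
      then show False using less(5) c2 by simp
    qed
    then obtain b where b: "b \<in> s" "u b \<noteq> 1" by blast
    define s' where "s' = s - {b}"
    have fin': "finite s'" using less(2) by (simp add: s'_def)
    have card': "card s' < card s" unfolding s'_def by (rule card_Diff1_less[OF less(2) b(1)])
    have "card s' = card s - 1" using b less(2) by (simp add: s'_def)
    then have ne': "s' \<noteq> {}" using c2 by auto
    have sums: "sum u s' = 1 - u b" using less(5) sum.remove[OF less(2) b(1), of u] by (simp add: s'_def)
    define w where "w v = u v / (1 - u b)" for v
    have nz: "1 - u b \<noteq> 0" using b by simp
    have sw: "sum w s' = 1" using sums nz by (simp add: w_def sum_divide_distrib[symmetric])
    have IH: "f (\<Sum>v\<in>s'. w v *\<^sub>R v) = ereal (\<Sum>v\<in>s'. w v * c v)"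
      using less(1)[OF card' fin' ne' _ sw] less(4) by (auto simp: s'_def)
    have e1: "(\<Sum>v\<in>s. u v *\<^sub>R v) = u b *\<^sub>R b + (1 - u b) *\<^sub>R (\<Sum>v\<in>s'. w v *\<^sub>R v)"
      using sum.remove[OF less(2) b(1), of "\<lambda>v. u v *\<^sub>R v"] nz
      by (simp add: s'_def w_def scaleR_sum_right)
    have e2: "(\<Sum>v\<in>s. u v * c v) = u b * c b + (1 - u b) * (\<Sum>v\<in>s'. w v * c v)"
      using sum.remove[OF less(2) b(1), of "\<lambda>v. u v * c v"] nz
      by (simp add: s'_def w_def sum_distrib_left)
    show ?thesis unfolding e1 e2
      by (rule aff2[OF ga less(4)[OF b(1)] IH]) simp
  qed
qed

lemma limit_convex:
  assumes cv: "\<And>n. ext_convex (f n)" and lim: "\<And>x. (\<lambda>n. f n x) \<longlonglongrightarrow> g x"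
  shows "ext_convex g"
  unfolding ext_convex_def convex_def
proof (clarsimp)
  fix x s y t and u v :: real
  assume gx: "g x \<le> ereal s" and gy: "g y \<le> ereal t" and u: "0 \<le> u" and v: "0 \<le> v" and uv: "u + v = 1"
  show "g (u *\<^sub>R x + v *\<^sub>R y) \<le> ereal (u * s + v * t)"
  proof (rule ereal_le_epsilon2)
    fix e :: real assume e: "0 < e"
    have "ereal s < ereal (s + e)" "ereal t < ereal (t + e)" using e by simp_all
    then have "g x < ereal (s + e)" "g y < ereal (t + e)"
      using le_less_trans[OF gx] le_less_trans[OF gy] by blast+
    then have ev1: "eventually (\<lambda>n. f n x < ereal (s + e)) sequentially"
      and ev2: "eventually (\<lambda>n. f n y < ereal (t + e)) sequentially"
      using order_tendstoD(2)[OF lim[of x]] order_tendstoD(2)[OF lim[of y]] by blast+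
    from ev1 ev2 have "eventually (\<lambda>n. f n (u *\<^sub>R x + v *\<^sub>R y) \<le> ereal (u * (s + e) + v * (t + e))) sequentially"
      by eventually_elim (rule conv_ineq[OF cv], auto simp: u v uv)
    moreover have "u * (s + e) + v * (t + e) = u * s + v * t + e"
    proof -
      have "u * (s + e) + v * (t + e) = u * s + v * t + e * (u + v)" by (simp add: algebra_simps)
      then show ?thesis using uv by simp
    qed
    ultimately have "g (u *\<^sub>R x + v *\<^sub>R y) \<le> ereal (u * s + v * t + e)"
      using tendsto_upperbound[OF lim] by simp
    then show "g (u *\<^sub>R x + v *\<^sub>R y) \<le> ereal (u * s + v * t) + ereal e" by simp
  qed
qed

lemma limit_ga:
  assumes ga: "\<And>n. generalized_affine (f n)" and lim: "\<And>x. (\<lambda>n. f n x) \<longlonglongrightarrow> g x"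
  shows "generalized_affine g"
proof -
  have "ext_convex g" by (rule limit_convex[of f g]) (use ga lim in \<open>auto simp: generalized_affine_def\<close>)
  moreover have "ext_convex (\<lambda>x. - g x)"
    using limit_convex[of "\<lambda>n x. - f n x" "\<lambda>x. - g x"] ga lim
    by (auto simp: generalized_affine_def concave_neg)
  ultimately show ?thesis by (simp add: generalized_affine_def concave_neg)
qed

lemma ereal_convsub:
  fixes s :: "nat \<Rightarrow> ereal"
  shows "\<exists>r. strict_mono r \<and> convergent (s \<circ> r)"
proof -
  obtain r where r: "strict_mono r" "monoseq (\<lambda>n. s (r n))" using seq_monosub[of s] by blast
  have "convergent (\<lambda>n. s (r n))"
  proof (cases "incseq (\<lambda>n. s (r n))")
    case True
    then show ?thesis by (intro convergentI) (rule LIMSEQ_SUP)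
  next
    case False
    then have "decseq (\<lambda>n. s (r n))" using r(2) unfolding monoseq_iff by simp
    then show ?thesis by (intro convergentI) (rule LIMSEQ_INF)
  qed
  then show ?thesis using r(1) by (intro exI[of _ r]) (simp add: o_def)
qed

lemma diag_sub:
  fixes g :: "nat \<Rightarrow> 'a \<Rightarrow> ereal"
  assumes "countable D"
  shows "\<exists>r. strict_mono r \<and> (\<forall>x\<in>D. convergent (\<lambda>n. g (r n) x))"
proof (cases "D = {}")
  case True then show ?thesis by (intro exI[of _ "\<lambda>n. n"]) (simp add: strict_mono_def)
next
  case False
  define e where "e = from_nat_into D"
  have De: "D = range e" using range_from_nat_into[OF False assms] by (simp add: e_def)
  interpret subseqs "\<lambda>n s. convergent (\<lambda>k. g (s k) (e n))"
  proof
    fix n and s :: "nat \<Rightarrow> nat" assume "strict_mono s"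
    obtain r' where "strict_mono r'" "convergent ((\<lambda>k. g (s k) (e n)) \<circ> r')"
      using ereal_convsub[of "\<lambda>k. g (s k) (e n)"] by blast
    then show "\<exists>r'. strict_mono r' \<and> convergent (\<lambda>k. g ((s \<circ> r') k) (e n))"
      by (intro exI[of _ r']) (simp add: o_def)
  qed
  have "convergent (\<lambda>k. g (diagseq k) (e n))" for n
  proof -
    have "convergent (\<lambda>k. g ((diagseq \<circ> (+) (Suc n)) k) (e n))"
    proof (rule diagseq_holds)
      fix r s n assume "strict_mono (r::nat\<Rightarrow>nat)" "convergent (\<lambda>k. g (s k) (e n))"
      from convergent_subseq_convergent[OF this(2) this(1)]
      show "convergent (\<lambda>k. g ((s \<circ> r) k) (e n))" by (simp add: o_def)
    qed
    moreover have "(\<lambda>k. g ((diagseq \<circ> (+) (Suc n)) k) (e n)) = (\<lambda>k. g (diagseq (k + Suc n)) (e n))"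
      by (rule ext) (simp only: o_def add.commute[of "Suc n"])
    ultimately have "convergent (\<lambda>k. g (diagseq (k + Suc n)) (e n))" by simp
    then show ?thesis by (rule iffD1[OF convergent_ignore_initial_segment[of "\<lambda>k. g (diagseq k) (e n)" "Suc n"]])
  qed
  note cv = this
  show ?thesis
  proof (intro exI[of _ diagseq] conjI subseq_diagseq ballI)
    fix x assume "x \<in> D"
    then obtain n where "x = e n" using De by auto
    then show "convergent (\<lambda>k. g (diagseq k) x)" using cv by simp
  qed
qed

lemma dense_hull:
  fixes S H D :: "'a::euclidean_space set"
  assumes S: "affine S" and H: "affine H" "\<not> S \<subseteq> H" and D: "D \<subseteq> S" "S \<subseteq> closure D"
    and x: "x \<in> S" "a \<bullet> x > b"
  shows "x \<in> convex hull {v \<in> D. v \<notin> H \<and> a \<bullet> v > b}"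
proof -
  define T where "T = {v \<in> D. v \<notin> H \<and> a \<bullet> v > b}"
  define U where "U = S \<inter> {v. a \<bullet> v > b}"
  have opH: "open {v. a \<bullet> v > b}" by (simp add: open_halfspace_gt)
  have clH: "closed H" using H(1) by (simp add: affine_closed)
  have UT: "U \<subseteq> closure T"
  proof
    fix y assume y: "y \<in> U"
    show "y \<in> closure T" unfolding closure_approachable
    proof (intro allI impI)
      fix e :: real assume e: "e > 0"
      define W where "W = ball y e \<inter> {v. a \<bullet> v > b}"
      have opW: "open W" using opH by (simp add: W_def open_Int)
      have "y \<in> S \<inter> W" using y e by (auto simp: U_def W_def)
      then have "affine hull (S \<inter> W) = affine hull S"
        by (intro affine_hull_affine_Int_open[OF S opW]) auto
      then have ahW: "affine hull (S \<inter> W) = S" using S by (simp add: affine_hull_eq)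
      have "\<not> S \<inter> W \<subseteq> H"
      proof
        assume "S \<inter> W \<subseteq> H"
        then have "affine hull (S \<inter> W) \<subseteq> H" using H(1) by (intro hull_minimal) auto
        then show False using ahW H(2) by simp
      qed
      then obtain w where w: "w \<in> S" "w \<in> W" "w \<notin> H" by blast
      have opO: "open (W \<inter> - H)" using opW clH by (simp add: open_Int open_Compl)
      have "w \<in> (W \<inter> - H) \<inter> closure D" using w D(2) by auto
      then have "(W \<inter> - H) \<inter> D \<noteq> {}" using open_Int_closure_eq_empty[OF opO, of D] by auto
      then obtain d where d: "d \<in> W" "d \<notin> H" "d \<in> D" by blast
      then have "d \<in> T" by (auto simp: T_def W_def)
      moreover have "dist d y < e" using d(1) by (auto simp: W_def dist_commute)
      ultimately show "\<exists>z\<in>T. dist z y < e" by blast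
    qed
  qed
  define C where "C = closure (convex hull T)"
  have TS: "T \<subseteq> S" using D(1) by (auto simp: T_def)
  have "convex hull T \<subseteq> S" using TS affine_imp_convex[OF S] by (intro hull_minimal) auto
  then have CS: "C \<subseteq> S" unfolding C_def using closure_mono[of "convex hull T" S] affine_closed[OF S]
    by (simp add: closure_closed)
  have UC: "U \<subseteq> C" using UT closure_mono[OF hull_subset[of T convex]] by (auto simp: C_def)
  have "affine hull C \<subseteq> S" using CS S by (intro hull_minimal) auto
  then have "{v. a \<bullet> v > b} \<inter> affine hull C \<subseteq> C" using UC by (auto simp: U_def)
  moreover have "x \<in> {v. a \<bullet> v > b} \<inter> C" using x UC by (auto simp: U_def)
  ultimately have "x \<in> rel_interior C" unfolding mem_rel_interior using opH by blast
  then have "x \<in> rel_interior (convex hull T)"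
    unfolding C_def by (simp add: convex_rel_interior_closure)
  then show ?thesis using rel_interior_subset T_def by blast
qed

lemma to_infty:
  fixes g :: "nat \<Rightarrow> 'a::euclidean_space \<Rightarrow> ereal"
  assumes cc: "\<And>n. ext_concave (g n)" and T: "\<And>v. v \<in> T \<Longrightarrow> (\<lambda>n. g n v) \<longlonglongrightarrow> \<infinity>"
    and x: "x \<in> convex hull T"
  shows "(\<lambda>n. g n x) \<longlonglongrightarrow> \<infinity>"
proof -
  have "x \<in> {x. \<exists>S. finite S \<and> S \<subseteq> T \<and> card S \<le> DIM('a) + 1 \<and> x \<in> convex hull S}"
    using x unfolding caratheodory[of T] .
  then obtain s where s: "finite s" "s \<subseteq> T" "x \<in> convex hull s" by auto
  show ?thesis unfolding tendsto_PInfty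
  proof
    fix r :: real
    have "eventually (\<lambda>n. \<forall>v\<in>s. ereal (r + 1) < g n v) sequentially"
      using s T unfolding tendsto_PInfty by (intro eventually_ball_finite) auto
    then show "eventually (\<lambda>n. ereal r < g n x) sequentially"
    proof eventually_elim
      case (elim n)
      have "\<And>v. v \<in> s \<Longrightarrow> ereal (r + 1) \<le> g n v" using elim by (simp add: less_imp_le)
      then have "ereal (r + 1) \<le> g n x"
        using hull_bound_conc[OF cc[of n], of s "r + 1" x] s(3) by blast
      moreover have "ereal r < ereal (r + 1)" by simp
      ultimately show ?case by (rule less_le_trans[rotated])
    qed
  qed
qed

lemma to_minfty:
  fixes g :: "nat \<Rightarrow> 'a::euclidean_space \<Rightarrow> ereal"
  assumes cv: "\<And>n. ext_convex (g n)" and T: "\<And>v. v \<in> T \<Longrightarrow> (\<lambda>n. g n v) \<longlonglongrightarrow> -\<infinity>"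
    and x: "x \<in> convex hull T"
  shows "(\<lambda>n. g n x) \<longlonglongrightarrow> -\<infinity>"
proof -
  have "x \<in> {x. \<exists>S. finite S \<and> S \<subseteq> T \<and> card S \<le> DIM('a) + 1 \<and> x \<in> convex hull S}"
    using x unfolding caratheodory[of T] .
  then obtain s where s: "finite s" "s \<subseteq> T" "x \<in> convex hull s" by auto
  show ?thesis unfolding tendsto_MInfty
  proof
    fix r :: real
    have "eventually (\<lambda>n. \<forall>v\<in>s. g n v < ereal (r - 1)) sequentially"
      using s T unfolding tendsto_MInfty by (intro eventually_ball_finite) auto
    then show "eventually (\<lambda>n. g n x < ereal r) sequentially"
    proof eventually_elim
      case (elim n)
      have "\<And>v. v \<in> s \<Longrightarrow> g n v \<le> ereal (r - 1)" using elim by (simp add: less_imp_le)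
      then have "g n x \<le> ereal (r - 1)"
        using hull_bound[OF cv[of n], of s "r - 1" x] s(3) by blast
      moreover have "ereal (r - 1) < ereal r" by simp
      ultimately show ?case by (rule le_less_trans)
    qed
  qed
qed

lemma sep:
  fixes S P M :: "'a::euclidean_space set"
  assumes S: "affine S" "S \<noteq> {}" and PS: "P \<subseteq> S" and MS: "M \<subseteq> S"
    and disj: "convex hull P \<inter> convex hull M = {}"
  shows "\<exists>a b. (\<forall>v\<in>P. b \<le> a \<bullet> v) \<and> (\<forall>v\<in>M. a \<bullet> v \<le> b) \<and> aff_dim (S \<inter> {x. a \<bullet> x = b}) < aff_dim S"
proof -
  have dS: "aff_dim S \<ge> 0" using S(2) by (metis aff_dim_negative_iff not_le)
  consider "P = {}" | "M = {}" | "P \<noteq> {}" "M \<noteq> {}" by blast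
  then show ?thesis
  proof cases
    case 1
    then show ?thesis using dS by (intro exI[of _ 0] exI[of _ 1]) auto
  next
    case 2
    then show ?thesis using dS by (intro exI[of _ 0] exI[of _ "-1"]) auto
  next
    case 3
    define CP where "CP = convex hull P"
    define CM where "CM = convex hull M"
    define A where "A = (\<Union>x\<in>CP. \<Union>y\<in>CM. {x - y})"
    have cA: "convex A" unfolding A_def CP_def CM_def by (intro convex_differences) auto
    have neA: "A \<noteq> {}" using 3 hull_subset[of P convex] hull_subset[of M convex]
      by (auto simp: A_def CP_def CM_def)
    have A0: "0 \<notin> A" using disj by (auto simp: A_def CP_def CM_def)
    obtain a where a: "a \<in> span A" "a \<noteq> 0" "\<And>z. z \<in> A \<Longrightarrow> 0 \<le> a \<bullet> z"
      using separating_hyperplane_set_0_inspan[OF cA neA A0] by blast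
    have sepa: "a \<bullet> y \<le> a \<bullet> x" if "x \<in> CP" "y \<in> CM" for x y
      using a(3)[of "x - y"] that by (auto simp: A_def inner_diff_right)
    obtain p where p: "p \<in> P" using 3 by blast
    obtain m where m: "m \<in> M" using 3 by blast
    have pCP: "P \<subseteq> CP" and mCM: "M \<subseteq> CM" by (auto simp: CP_def CM_def hull_subset[THEN subsetD])
    define b where "b = Inf ((\<lambda>x. a \<bullet> x) ` CP)"
    have bdd: "bdd_below ((\<lambda>x. a \<bullet> x) ` CP)"
      using sepa mCM m by (auto simp: bdd_below_def)
    have b1: "\<forall>v\<in>P. b \<le> a \<bullet> v" unfolding b_def using pCP bdd by (auto intro: cInf_lower)
    have b2: "\<forall>v\<in>M. a \<bullet> v \<le> b" unfolding b_def using pCP p mCM sepa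
      by (auto intro!: cInf_greatest)
    have CPS: "CP \<subseteq> S" unfolding CP_def using PS affine_imp_convex[OF S(1)] by (intro hull_minimal) auto
    have CMS: "CM \<subseteq> S" unfolding CM_def using MS affine_imp_convex[OF S(1)] by (intro hull_minimal) auto
    have pS: "p \<in> S" using p PS by auto
    define V where "V = (\<lambda>x. x - p) ` S"
    have sV: "subspace V" unfolding V_def by (rule affine_diffs_subspace_subtract[OF S(1) pS])
    have "A \<subseteq> V"
    proof
      fix z assume "z \<in> A"
      then obtain x y where xy: "x \<in> CP" "y \<in> CM" "z = x - y" by (auto simp: A_def)
      have "x - p \<in> V" "y - p \<in> V" using xy CPS CMS by (auto simp: V_def)
      then have "(x - p) - (y - p) \<in> V" using subspace_diff[OF sV] by blast
      then show "z \<in> V" using xy by simp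
    qed
    then have "span A \<subseteq> V" using sV by (rule span_minimal)
    then have "a \<in> V" using a(1) by auto
    then obtain q where q: "q \<in> S" "a = q - p" by (auto simp: V_def)
    have pa: "p + a \<in> S" using q by simp
    define L where "L = S \<inter> {x. a \<bullet> x = b}"
    have aL: "affine L" unfolding L_def using S(1) by (intro affine_Int affine_hyperplane)
    have "a \<bullet> (p + a) \<noteq> a \<bullet> p" using a(2) by (simp add: inner_add_right)
    then have "\<not> S \<subseteq> L" using pS pa by (auto simp: L_def)
    then have "L \<subset> S" by (auto simp: L_def)
    then have "aff_dim L < aff_dim S"
    proof -
      have h1: "affine hull L = L" using affine_hull_eq[of L] aL by simp
      have h2: "affine hull S = S" using affine_hull_eq[of S] S(1) by simp
      have "affine hull L \<subset> affine hull S" unfolding h1 h2 by (rule \<open>L \<subset> S\<close>)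
      then show ?thesis by (rule aff_dim_psubset)
    qed
    then show ?thesis using b1 b2 unfolding L_def by blast
  qed
qed

lemma main:
  fixes f :: "nat \<Rightarrow> 'a::euclidean_space \<Rightarrow> ereal"
  shows "affine S \<Longrightarrow> aff_dim S < int k \<Longrightarrow> (\<And>n. generalized_affine (f n)) \<Longrightarrow>
    \<exists>r. strict_mono r \<and> (\<forall>x\<in>S. convergent (\<lambda>n. f (r n) x))"
proof (induct k arbitrary: S f)
  case 0
  then have "S = {}" by simp
  then show ?case by (intro exI[of _ "\<lambda>n. n"]) (simp add: strict_mono_def)
next
  case (Suc k)
  note affS = Suc.prems(1) and gaf = Suc.prems(3)
  show ?case
  proof (cases "S = {}")
    case True then show ?thesis by (intro exI[of _ "\<lambda>n. n"]) (simp add: strict_mono_def)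
  next
    case Sne: False
    obtain D where D: "countable D" "D \<subseteq> S" "S \<subseteq> closure D" using separable[of S] by blast
    obtain r1 where r1: "strict_mono r1" "\<forall>x\<in>D. convergent (\<lambda>n. f (r1 n) x)"
      using diag_sub[OF D(1), of f] by blast
    define g where "g n = f (r1 n)" for n
    have gag: "generalized_affine (g n)" for n using gaf by (simp add: g_def)
    have cvg: "ext_convex (g n)" and ccg: "ext_concave (g n)" for n
      using gag by (auto simp: generalized_affine_def)
    define h where "h v = lim (\<lambda>n. g n v)" for v
    have limh: "(\<lambda>n. g n v) \<longlonglongrightarrow> h v" if "v \<in> D" for v
      using r1(2) that by (simp add: g_def h_def convergent_LIMSEQ_iff)
    define F where "F = {v\<in>D. h v \<noteq> \<infinity> \<and> h v \<noteq> -\<infinity>}"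
    have FS: "F \<subseteq> S" using D(2) by (auto simp: F_def)
    show ?thesis
    proof (cases "affine hull F = S")
      case True
      have "convergent (\<lambda>n. g n x)" if x: "x \<in> S" for x
      proof -
        have "x \<in> affine hull F" using x True by simp
        then obtain s u where su: "finite s" "s \<noteq> {}" "s \<subseteq> F" "sum u s = 1" "(\<Sum>v\<in>s. u v *\<^sub>R v) = x"
          unfolding affine_hull_explicit by blast
        define c where "c v = real_of_ereal (h v)" for v
        have hc: "h v = ereal (c v)" if "v \<in> s" for v
        proof -
          have "h v \<noteq> \<infinity>" "h v \<noteq> -\<infinity>" using that su(3) by (auto simp: F_def)
          then show ?thesis unfolding c_def by (cases "h v") auto
        qed
        have lc: "(\<lambda>n. g n v) \<longlonglongrightarrow> ereal (c v)" if "v \<in> s" for v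
          using limh[of v] hc[OF that] that su(3) by (auto simp: F_def)
        have ev: "eventually (\<lambda>n. \<forall>v\<in>s. g n v < \<infinity> \<and> g n v > -\<infinity>) sequentially"
          using su(1)
        proof (intro eventually_ball_finite ballI)
          fix v assume v: "v \<in> s"
          show "eventually (\<lambda>n. g n v < \<infinity> \<and> g n v > -\<infinity>) sequentially"
            by (intro eventually_conj order_tendstoD(1)[OF lc[OF v]] order_tendstoD(2)[OF lc[OF v]]) simp_all
        qed
        have eq: "eventually (\<lambda>n. g n x = ereal (\<Sum>v\<in>s. u v * real_of_ereal (g n v))) sequentially"
          using ev
        proof eventually_elim
          case (elim n)
          have "\<And>v. v \<in> s \<Longrightarrow> g n v = ereal (real_of_ereal (g n v))"
          proof -
            fix v assume "v \<in> s"
            then have "g n v < \<infinity>" "g n v > -\<infinity>" using elim by auto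
            then show "g n v = ereal (real_of_ereal (g n v))" by (cases "g n v") auto
          qed
          from affsum[OF gag su(1,2) this su(4)] show ?case using su(5) by simp
        qed
        have "(\<lambda>n. ereal (\<Sum>v\<in>s. u v * real_of_ereal (g n v))) \<longlonglongrightarrow> ereal (\<Sum>v\<in>s. u v * c v)"
          by (intro tendsto_ereal tendsto_sum tendsto_mult_left lim_real_of_ereal lc)
        then have "(\<lambda>n. g n x) \<longlonglongrightarrow> ereal (\<Sum>v\<in>s. u v * c v)"
        proof -
          from eq have "eventually (\<lambda>n. ereal (\<Sum>v\<in>s. u v * real_of_ereal (g n v)) = g n x) sequentially"
            by eventually_elim simp
          then show ?thesis by (rule Lim_transform_eventually[OF \<open>(\<lambda>n. ereal (\<Sum>v\<in>s. u v * real_of_ereal (g n v))) \<longlonglongrightarrow> _\<close>])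
        qed
        then show ?thesis by (rule convergentI)
      qed
      then show ?thesis using r1(1) by (auto simp: g_def)
    next
      case False
      define H where "H = affine hull F"
      have aH: "affine H" by (simp add: H_def)
      have HS: "H \<subseteq> S" unfolding H_def using FS affS by (intro hull_minimal) auto
      have nSH: "\<not> S \<subseteq> H" using HS False H_def by auto
      define Pp where "Pp = {v\<in>D. h v = \<infinity>}"
      define Mm where "Mm = {v\<in>D. h v = -\<infinity>}"
      have PpS: "Pp \<subseteq> S" "Mm \<subseteq> S" using D(2) by (auto simp: Pp_def Mm_def)
      have limP: "(\<lambda>n. g n v) \<longlonglongrightarrow> \<infinity>" if "v \<in> Pp" for v
        using that limh[of v] by (simp add: Pp_def)
      have limM: "(\<lambda>n. g n v) \<longlonglongrightarrow> -\<infinity>" if "v \<in> Mm" for v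
        using that limh[of v] by (simp add: Mm_def)
      have toP: "(\<lambda>n. g n x) \<longlonglongrightarrow> \<infinity>" if "x \<in> convex hull Pp" for x
        by (rule to_infty[where g=g and T=Pp, OF ccg _ that]) (rule limP)
      have toM: "(\<lambda>n. g n x) \<longlonglongrightarrow> -\<infinity>" if "x \<in> convex hull Mm" for x
        by (rule to_minfty[where g=g and T=Mm, OF cvg _ that]) (rule limM)
      have disj: "convex hull Pp \<inter> convex hull Mm = {}"
      proof (rule ccontr)
        assume "convex hull Pp \<inter> convex hull Mm \<noteq> {}"
        then obtain y where "y \<in> convex hull Pp" "y \<in> convex hull Mm" by blast
        from LIMSEQ_unique[OF toP[OF this(1)] toM[OF this(2)]] show False by simp
      qed
      obtain a b where ab: "\<forall>v\<in>Pp. b \<le> a \<bullet> v" "\<forall>v\<in>Mm. a \<bullet> v \<le> b"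
        "aff_dim (S \<inter> {x. a \<bullet> x = b}) < aff_dim S"
        using sep[OF affS Sne PpS disj] by blast
      have notF: "v \<in> Pp \<or> v \<in> Mm" if "v \<in> D" "v \<notin> H" for v
        using that hull_subset[of F affine] by (auto simp: Pp_def Mm_def F_def H_def)
      have gt: "(\<lambda>n. g n x) \<longlonglongrightarrow> \<infinity>" if "x \<in> S" "a \<bullet> x > b" for x
      proof -
        have "x \<in> convex hull {v \<in> D. v \<notin> H \<and> a \<bullet> v > b}"
          by (rule dense_hull[OF affS aH nSH D(2,3) that])
        moreover have "{v \<in> D. v \<notin> H \<and> a \<bullet> v > b} \<subseteq> Pp"
        proof
          fix v assume v: "v \<in> {v \<in> D. v \<notin> H \<and> a \<bullet> v > b}"
          then have "v \<notin> Mm" using ab(2) by force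
          then show "v \<in> Pp" using notF v by blast
        qed
        then have "convex hull {v \<in> D. v \<notin> H \<and> a \<bullet> v > b} \<subseteq> convex hull Pp" by (rule hull_mono)
        ultimately show ?thesis using toP by blast
      qed
      have lt: "(\<lambda>n. g n x) \<longlonglongrightarrow> -\<infinity>" if "x \<in> S" "a \<bullet> x < b" for x
      proof -
        have "(-a) \<bullet> x > -b" using that by simp
        then have "x \<in> convex hull {v \<in> D. v \<notin> H \<and> (-a) \<bullet> v > -b}"
          by (rule dense_hull[OF affS aH nSH D(2,3) that(1)])
        moreover have "{v \<in> D. v \<notin> H \<and> (-a) \<bullet> v > -b} \<subseteq> Mm"
        proof
          fix v assume v: "v \<in> {v \<in> D. v \<notin> H \<and> (-a) \<bullet> v > -b}"
          then have "v \<notin> Pp" using ab(1) by force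
          then show "v \<in> Mm" using notF v by blast
        qed
        then have "convex hull {v \<in> D. v \<notin> H \<and> (-a) \<bullet> v > -b} \<subseteq> convex hull Mm" by (rule hull_mono)
        ultimately show ?thesis using toM by blast
      qed
      define L where "L = S \<inter> {x. a \<bullet> x = b}"
      have aL: "affine L" unfolding L_def using affS by (intro affine_Int affine_hyperplane)
      have dL: "aff_dim L < int k" using ab(3) Suc.prems(2) by (simp add: L_def)
      obtain r2 where r2: "strict_mono r2" "\<forall>x\<in>L. convergent (\<lambda>n. g (r2 n) x)"
        using Suc.hyps[OF aL dL, of g] gag by blast
      have "convergent (\<lambda>n. f ((r1 \<circ> r2) n) x)" if x: "x \<in> S" for x
      proof (cases "a \<bullet> x = b")
        case True
        then show ?thesis using r2(2) x by (auto simp: L_def g_def)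
      next
        case False
        then have "(\<lambda>n. g n x) \<longlonglongrightarrow> \<infinity> \<or> (\<lambda>n. g n x) \<longlonglongrightarrow> -\<infinity>"
        proof (cases "a \<bullet> x > b")
          case True then show ?thesis using gt[OF x] by blast
        next
          case False then have "a \<bullet> x < b" using \<open>a \<bullet> x \<noteq> b\<close> by linarith
          then show ?thesis using lt[OF x] by blast
        qed
        then have "convergent (\<lambda>n. g n x)" by (auto intro: convergentI)
        then have "convergent ((\<lambda>n. g n x) \<circ> r2)" using r2(1) by (rule convergent_subseq_convergent)
        then show ?thesis by (simp add: g_def o_def)
      qed
      moreover have "strict_mono (r1 \<circ> r2)" using r1(1) r2(1) by (rule strict_mono_o)
      ultimately show ?thesis by blast
    qed
  qed
qed

theorem corollary1:
  fixes f :: "nat \<Rightarrow> 'a::euclidean_space \<Rightarrow> ereal"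
  assumes "\<And>n. generalized_affine (f n)"
  shows "\<exists>r g. strict_mono r \<and> generalized_affine g \<and>
           (\<forall>x. (\<lambda>n. f (r n) x) \<longlonglongrightarrow> g x)"
proof -
  have "aff_dim (UNIV :: 'a set) < int (Suc DIM('a))" by simp
  from main[of UNIV "Suc DIM('a)" f, OF affine_UNIV this assms] obtain r where
    r: "strict_mono r" "\<forall>x. convergent (\<lambda>n. f (r n) x)" by blast
  define g where "g x = lim (\<lambda>n. f (r n) x)" for x
  have lim: "(\<lambda>n. f (r n) x) \<longlonglongrightarrow> g x" for x
    using r(2) by (simp add: g_def convergent_LIMSEQ_iff)
  have "generalized_affine g" using limit_ga[of "\<lambda>n. f (r n)", OF assms lim] .
  then show ?thesis using r(1) lim by blast
qed

end
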